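(* Let $c$ be a prefix equivariant statistic and $\theta>0$. Let $2\le k\le N$. If the increasing prefix $e_k=12\cdots k$ is negative, then the increasing prefix $e_{k-1}=12\cdots(k-1)$ is negative.
   Context: Permutations of $\{1,\dots,m\}$ are written in one-line notation; $\mathfrak S_m$ is the set of all of them. Fix $N\ge1$, a statistic $c:\bigcup_{m=1}^N\mathfrak S_m\to\mathbb Z_{\ge0}$ and a real $\theta>0$. Prefixes and containment: - A prefix is an element of $\bigcup_{m=1}^N\mathfrak S_m$. - $\pi^{(i)}\in\mathfrak S_i$ denotes the unique permutation with the same relative order as $\pi_1,\dots,\pi_i$. - A prefix $r\in\mathfrak S_n$ contains $p\in\mathfrak S_m$ if $r^{(m)}=p$. - For $p\in\mathfrak S_m$ and $\pi\in\mathfrak S_N$: $\pi$ is $p$-prefixed if $\pi^{(m)}=p$, and $p$-winnable if moreover $\pi_m=N$. Probabilities: - $D(p)=\sum_{p\text{-prefixed }\pi}\theta^{c(\pi)}$. - $S(p)=\big(\sum_{p\text{-winnable }\pi}\theta^{c(\pi)}\big)/D(p)$. - $S^c(p)=0$ for $p\in\mathfrak S_N$; for $p\in\mathfrak S_m$ with $m<N$, $S^c(p)=\big(\sum_{q'\in\mathfrak S_{m+1}\text{ containing }p}D(q')\bar S(q')\big)/D(p)$. - $\bar S(p)=\max(S(p),S^c(p))$. - $p$ is positive if $S(p)\ge S^c(p)$, and negative otherwise. Let $e_k=12\cdots k$. For $q\in\mathfrak S_k$ and $\pi\in\mathfrak S_m$ with $\pi_1<\cdots<\pi_k$, $\sigma_q\cdot\pi$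 is given by $(\sigma_q\cdot\pi)_i=\pi_{q_i}$ for $i\le k$ and $(\sigma_q\cdot\pi)_i=\pi_i$ for $i>k$. The statistic $c$ is prefix equivariant if $c(\pi)-c(\sigma_q\cdot\pi)=c(e_k)-c(q)$ for all $k\le m\le N$, all $q\in\mathfrak S_k$, and all $\pi\in\mathfrak S_m$ with $\pi_1<\cdots<\pi_k$. *)

theory Defs
  imports Complex_Main
begin

definition perms :: "nat \<Rightarrow> nat list set" where
  "perms m = {xs. length xs = m \<and> distinct xs \<and> set xs = {1..m}}"

definition std :: "nat list \<Rightarrow> nat list" where
  "std xs = map (\<lambda>x. card {y \<in> set xs. y \<le> x}) xs"

definition pat :: "nat \<Rightarrow> nat list \<Rightarrow> nat list" where
  "pat i xs = std (take i xs)"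

definition inc :: "nat \<Rightarrow> nat list" where
  "inc k = [1..<Suc k]"

definition Dw :: "nat \<Rightarrow> (nat list \<Rightarrow> nat) \<Rightarrow> real \<Rightarrow> nat list \<Rightarrow> real" where
  "Dw N c \<theta> p = (\<Sum>\<pi>\<in>{\<pi> \<in> perms N. pat (length p) \<pi> = p}. \<theta> ^ c \<pi>)"

text \<open>S(p): probability of success when stopping at p.\<close>
definition Sw :: "nat \<Rightarrow> (nat list \<Rightarrow> nat) \<Rightarrow> real \<Rightarrow> nat list \<Rightarrow> real" where
  "Sw N c \<theta> p = (\<Sum>\<pi>\<in>{\<pi> \<in> perms N. pat (length p) \<pi> = p \<and> \<pi> ! (length p - 1) = N}. \<theta> ^ c \<pi>)
                   / Dw N c \<theta> p"

text \<open>Continuation value given the optimal values f of the one-step extensions.\<close>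
definition Scont :: "nat \<Rightarrow> (nat list \<Rightarrow> nat) \<Rightarrow> real \<Rightarrow> (nat list \<Rightarrow> real) \<Rightarrow> nat list \<Rightarrow> real" where
  "Scont N c \<theta> f p = (\<Sum>q\<in>{q \<in> perms (Suc (length p)). pat (length p) q = p}. Dw N c \<theta> q * f q)
                       / Dw N c \<theta> p"

primrec SbarR :: "nat \<Rightarrow> nat \<Rightarrow> (nat list \<Rightarrow> nat) \<Rightarrow> real \<Rightarrow> nat list \<Rightarrow> real" where
  "SbarR 0 N c \<theta> p = max (Sw N c \<theta> p) 0"
| "SbarR (Suc j) N c \<theta> p = max (Sw N c \<theta> p) (Scont N c \<theta> (SbarR j N c \<theta>) p)"

definition Sbar :: "nat \<Rightarrow> (nat list \<Rightarrow> nat) \<Rightarrow> real \<Rightarrow> nat list \<Rightarrow> real" where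
  "Sbar N c \<theta> p = SbarR (N - length p) N c \<theta> p"

definition Sc :: "nat \<Rightarrow> (nat list \<Rightarrow> nat) \<Rightarrow> real \<Rightarrow> nat list \<Rightarrow> real" where
  "Sc N c \<theta> p = (if length p < N then Scont N c \<theta> (Sbar N c \<theta>) p else 0)"

definition positive_prefix :: "nat \<Rightarrow> (nat list \<Rightarrow> nat) \<Rightarrow> real \<Rightarrow> nat list \<Rightarrow> bool" where
  "positive_prefix N c \<theta> p \<longleftrightarrow> Sw N c \<theta> p \<ge> Sc N c \<theta> p"

definition negative_prefix :: "nat \<Rightarrow> (nat list \<Rightarrow> nat) \<Rightarrow> real \<Rightarrow> nat list \<Rightarrow> bool" where
  "negative_prefix N c \<theta> p \<longleftrightarrow> Sw N c \<theta> p < Sc N c \<theta> p"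

definition sigma_act :: "nat list \<Rightarrow> nat list \<Rightarrow> nat list" where
  "sigma_act q \<pi> = map (\<lambda>i. \<pi> ! (i - 1)) q @ drop (length q) \<pi>"

definition prefix_equivariant :: "nat \<Rightarrow> (nat list \<Rightarrow> nat) \<Rightarrow> bool" where
  "prefix_equivariant N c \<longleftrightarrow>
     (\<forall>k m q \<pi>. 1 \<le> k \<longrightarrow> k \<le> m \<longrightarrow> m \<le> N \<longrightarrow> q \<in> perms k \<longrightarrow> \<pi> \<in> perms m \<longrightarrow>
        sorted_wrt (<) (take k \<pi>) \<longrightarrow>
        int (c \<pi>) - int (c (sigma_act q \<pi>)) = int (c (inc k)) - int (c q))"

end

theory Submission
  imports Defs "HOL-Library.Multiset"
begin

definition rk :: "nat list \<Rightarrow> nat \<Rightarrow> nat" where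
  "rk xs x = card {y \<in> set xs. y \<le> x}"

lemma std_rk: "std xs = map (rk xs) xs"
  by (simp add: std_def rk_def)

lemma rk_le: "x \<le> y \<Longrightarrow> rk xs x \<le> rk xs y"
  unfolding rk_def by (rule card_mono) auto

lemma rk_less: "y \<in> set xs \<Longrightarrow> x < y \<Longrightarrow> rk xs x < rk xs y"
proof -
  assume a: "y \<in> set xs" "x < y"
  have "{z \<in> set xs. z \<le> x} \<subseteq> {z \<in> set xs. z \<le> y}" using a by auto
  moreover have "y \<notin> {z \<in> set xs. z \<le> x}" "y \<in> {z \<in> set xs. z \<le> y}" using a by auto
  ultimately have "{z \<in> set xs. z \<le> x} \<subset> {z \<in> set xs. z \<le> y}" by blast
  then show ?thesis unfolding rk_def by (rule psubset_card_mono[rotated]) simp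
qed

lemma rk_less_iff: "x \<in> set xs \<Longrightarrow> y \<in> set xs \<Longrightarrow> rk xs x < rk xs y \<longleftrightarrow> x < y"
  by (meson leI less_le_not_le rk_le rk_less)

lemma rk_eq_iff: "x \<in> set xs \<Longrightarrow> y \<in> set xs \<Longrightarrow> rk xs x = rk xs y \<longleftrightarrow> x = y"
  by (metis linorder_neqE_nat rk_less less_irrefl)

lemma rk_sorted_nth:
  assumes "sorted_wrt (<) ys" "j < length ys"
  shows "rk ys (ys ! j) = Suc j"
proof -
  have "{y \<in> set ys. y \<le> ys ! j} = (\<lambda>i. ys ! i) ` {..j}"
  proof (rule set_eqI, rule iffI)
    fix y assume "y \<in> {y \<in> set ys. y \<le> ys ! j}"
    then obtain i where i: "i < length ys" "y = ys ! i" "ys ! i \<le> ys ! j"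
      by (auto simp: in_set_conv_nth)
    have "i \<le> j"
    proof (rule ccontr)
      assume "\<not> i \<le> j" then have "ys ! j < ys ! i" using sorted_wrt_nth_less[OF assms(1)] i by auto
      then show False using i by simp
    qed
    then show "y \<in> (\<lambda>i. ys ! i) ` {..j}" using i by auto
  next
    fix y assume "y \<in> (\<lambda>i. ys ! i) ` {..j}"
    then obtain i where i: "i \<le> j" "y = ys ! i" by auto
    have "ys ! i \<le> ys ! j" using i sorted_wrt_nth_less[OF assms(1), of i j] assms(2)
      by (cases "i = j") auto
    then show "y \<in> {y \<in> set ys. y \<le> ys ! j}" using i assms(2) by auto
  qed
  moreover have "inj_on (\<lambda>i. ys ! i) {..j}"
    using assms strict_sorted_iff[of ys] by (auto simp: inj_on_def nth_eq_iff_index_eq)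
  ultimately show ?thesis unfolding rk_def by (simp add: card_image)
qed

lemma std_sorted: "sorted_wrt (<) ys \<Longrightarrow> std ys = [1..<Suc (length ys)]"
  by (rule nth_equalityI) (auto simp: std_rk rk_sorted_nth nth_upt simp del: upt_Suc)

lemma finite_perms: "finite (perms m)"
proof -
  have "perms m \<subseteq> {xs. set xs \<subseteq> {1..m} \<and> length xs = m}" by (auto simp: perms_def)
  then show ?thesis using finite_lists_length_eq[of "{1..m}" m] finite_subset by auto
qed

lemma perms_mset: "xs \<in> perms m \<longleftrightarrow> mset xs = mset [1..<Suc m]"
proof
  assume "xs \<in> perms m"
  moreover have "set [1..<Suc m] = {1..m}" by auto
  ultimately show "mset xs = mset [1..<Suc m]"
    using set_eq_iff_mset_eq_distinct[of xs "[1..<Suc m]"] by (simp add: perms_def)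
next
  assume h: "mset xs = mset [1..<Suc m]"
  then have "length xs = m" by (metis length_upt diff_Suc_1 size_mset)
  moreover have "distinct xs" using h by (metis distinct_upt mset_eq_imp_distinct_iff)
  moreover have "set xs = {1..m}" using h by (metis atLeastLessThanSuc_atLeastAtMost mset_eq_setD set_upt)
  ultimately show "xs \<in> perms m" by (simp add: perms_def)
qed

lemma std_perm: "distinct xs \<Longrightarrow> std xs \<in> perms (length xs)"
proof -
  assume d: "distinct xs"
  have inj: "inj_on (rk xs) (set xs)" by (auto simp: inj_on_def rk_eq_iff)
  have "distinct (std xs)" using d inj by (simp add: std_rk distinct_map)
  moreover have "set (std xs) = {1..length xs}"
  proof (rule card_subset_eq)
    show "set (std xs) \<subseteq> {1..length xs}"
    proof
      fix z assume "z \<in> set (std xs)"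
      then obtain x where x: "x \<in> set xs" "z = rk xs x" by (auto simp: std_rk)
      have "x \<in> {y \<in> set xs. y \<le> x}" using x by auto
      then have "0 < card {y \<in> set xs. y \<le> x}" by (auto simp: card_gt_0_iff)
      then have "1 \<le> z" using x unfolding rk_def by simp
      moreover have "z \<le> card (set xs)" unfolding x rk_def by (rule card_mono) auto
      ultimately show "z \<in> {1..length xs}" using d distinct_card by fastforce
    qed
    show "card (set (std xs)) = card {1..length xs}"
      using card_image[OF inj] distinct_card[OF d] by (simp add: std_rk)
  qed simp
  ultimately show ?thesis by (simp add: perms_def std_rk)
qed

lemma std_map_mono:
  assumes "\<And>x y. x \<in> set xs \<Longrightarrow> y \<in> set xs \<Longrightarrow> x < y \<Longrightarrow> f x < f y"
  shows "std (map f xs) = std xs"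
proof -
  have iff: "f y \<le> f x \<longleftrightarrow> y \<le> x" if "x \<in> set xs" "y \<in> set xs" for x y
    using assms that by (metis leD le_less linorder_neqE_nat)
  have inj: "inj_on f (set xs)" using assms by (metis inj_onI linorder_neqE_nat less_irrefl)
  have "rk (map f xs) (f x) = rk xs x" if "x \<in> set xs" for x
  proof -
    have "{y \<in> set (map f xs). y \<le> f x} = f ` {y \<in> set xs. y \<le> x}"
      using iff that by auto
    then show ?thesis unfolding rk_def using inj by (simp add: card_image inj_on_subset[OF inj])
  qed
  then show ?thesis by (simp add: std_rk)
qed

lemma pat_pat: "k \<le> n \<Longrightarrow> pat k (pat n \<pi>) = pat k \<pi>"
proof -
  assume kn: "k \<le> n"
  have "pat k (pat n \<pi>) = std (map (rk (take n \<pi>)) (take k (take n \<pi>)))"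
    by (simp add: pat_def std_rk take_map)
  also have "\<dots> = std (take k (take n \<pi>))"
    by (rule std_map_mono) (meson in_set_takeD rk_less)
  also have "\<dots> = pat k \<pi>" using kn by (simp add: pat_def min_absorb1)
  finally show ?thesis .
qed

lemma sorted_take_std: "sorted_wrt (<) (take k (std xs)) \<longleftrightarrow> sorted_wrt (<) (take k xs)"
proof -
  have "sorted_wrt (<) (take k (std xs)) = sorted_wrt (\<lambda>x y. rk xs x < rk xs y) (take k xs)"
    by (simp add: std_rk take_map sorted_wrt_map)
  also have "\<dots> = sorted_wrt (<) (take k xs)"
    by (intro iffI; erule sorted_wrt_mono_rel[rotated]) (meson in_set_takeD rk_less_iff)+
  finally show ?thesis .
qed

lemma sorted_from_pat:
  assumes "pat n \<pi> = t" "k \<le> n" "sorted_wrt (<) (take k t)"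
  shows "sorted_wrt (<) (take k \<pi>)"
  using assms sorted_take_std[of k "take n \<pi>"] by (simp add: pat_def min_absorb1)


lemma perms_len: "q \<in> perms k \<Longrightarrow> length q = k" by (simp add: perms_def)
lemma perms_set: "q \<in> perms k \<Longrightarrow> i \<in> set q \<Longrightarrow> 1 \<le> i \<and> i \<le> k" by (auto simp: perms_def)

lemma perms_idx: "q \<in> perms k \<Longrightarrow> i \<in> set q \<Longrightarrow> i - 1 < k"
  by (auto simp: perms_def)

lemma map_upt_take: "k \<le> length xs \<Longrightarrow> map (\<lambda>i. xs ! (i - 1)) [1..<Suc k] = take k xs"
  by (rule nth_equalityI) (auto simp: nth_upt simp del: upt_Suc)

lemma mset_take_sigma:
  assumes "q \<in> perms k" "k \<le> length xs"
  shows "mset (map (\<lambda>i. xs ! (i - 1)) q) = mset (take k xs)"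
proof -
  have "mset q = mset [1..<Suc k]" using assms perms_mset by blast
  have "mset (map (\<lambda>i. xs ! (i - 1)) q) = image_mset (\<lambda>i. xs ! (i - 1)) (mset q)" by (rule mset_map)
  also have "\<dots> = image_mset (\<lambda>i. xs ! (i - 1)) (mset [1..<Suc k])" using \<open>mset q = _\<close> by (simp only:)
  also have "\<dots> = mset (map (\<lambda>i. xs ! (i - 1)) [1..<Suc k])" by (rule mset_map[symmetric])
  also have "\<dots> = mset (take k xs)" using map_upt_take[OF assms(2)] by (simp only:)
  finally show ?thesis .
qed

lemma mset_sigma:
  assumes "q \<in> perms k" "k \<le> length xs"
  shows "mset (sigma_act q xs) = mset xs"
proof -
  have "mset (sigma_act q xs) = mset (take k xs) + mset (drop k xs)"
    using mset_take_sigma[OF assms] perms_len[OF assms(1)] by (simp add: sigma_act_def)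
  also have "\<dots> = mset xs" by (metis append_take_drop_id mset_append)
  finally show ?thesis .
qed

lemma length_sigma: "q \<in> perms k \<Longrightarrow> k \<le> length xs \<Longrightarrow> length (sigma_act q xs) = length xs"
  by (metis mset_sigma size_mset)

lemma set_sigma: "q \<in> perms k \<Longrightarrow> k \<le> length xs \<Longrightarrow> set (sigma_act q xs) = set xs"
  by (metis mset_sigma set_mset_mset)

lemma map_sigma:
  assumes "q \<in> perms k" "k \<le> length xs"
  shows "map f (sigma_act q xs) = sigma_act q (map f xs)"
proof -
  have "map (\<lambda>i. f (xs ! (i - 1))) q = map (\<lambda>i. map f xs ! (i - 1)) q"
  proof (rule map_cong[OF refl])
    fix i assume "i \<in> set q" then have "i - 1 < length xs" using perms_idx[OF assms(1)] assms(2) by fastforce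
    then show "f (xs ! (i - 1)) = map f xs ! (i - 1)" by simp
  qed
  then show ?thesis by (simp add: sigma_act_def drop_map)
qed

lemma take_sigma:
  assumes "q \<in> perms k" "k \<le> n" "k \<le> length xs"
  shows "take n (sigma_act q xs) = sigma_act q (take n xs)"
proof -
  have l: "length q = k" using perms_len[OF assms(1)] .
  have "map (\<lambda>i. xs ! (i - 1)) q = map (\<lambda>i. take n xs ! (i - 1)) q"
  proof (rule map_cong[OF refl])
    fix i assume "i \<in> set q" then have "i - 1 < n" using perms_idx[OF assms(1)] assms(2) by fastforce
    then show "xs ! (i - 1) = take n xs ! (i - 1)" by simp
  qed
  moreover have "take (n - k) (drop k xs) = drop k (take n xs)"
    using assms by (simp add: drop_take)
  ultimately show ?thesis using l assms(2) by (simp add: sigma_act_def)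
qed

lemma rk_set_eq: "set xs = set ys \<Longrightarrow> rk xs = rk ys"
  by (simp add: rk_def fun_eq_iff)

lemma std_sigma:
  assumes "q \<in> perms k" "k \<le> length xs"
  shows "std (sigma_act q xs) = sigma_act q (std xs)"
  using rk_set_eq[OF set_sigma[OF assms]] map_sigma[OF assms] by (simp add: std_rk)

lemma pat_sigma:
  assumes "q \<in> perms k" "k \<le> n" "k \<le> length xs"
  shows "pat n (sigma_act q xs) = sigma_act q (pat n xs)"
proof -
  have "k \<le> length (take n xs)" using assms by simp
  then show ?thesis using assms by (simp add: pat_def take_sigma std_sigma)
qed

lemma sigma_nth_ge:
  assumes "q \<in> perms k" "k \<le> i" "i < length xs"
  shows "sigma_act q xs ! i = xs ! i"
  using assms perms_len[OF assms(1)] by (simp add: sigma_act_def nth_append)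

lemma sigma_nth_lt:
  assumes "q \<in> perms k" "i < k"
  shows "sigma_act q xs ! i = xs ! (q ! i - 1)"
  using assms perms_len[OF assms(1)] by (simp add: sigma_act_def nth_append)

lemma inc_perm: "inc k \<in> perms k"
  by (auto simp: inc_def perms_def)

lemma length_inc[simp]: "length (inc k) = k" by (simp add: inc_def)

lemma sigma_inc: "q \<in> perms k \<Longrightarrow> sigma_act q (inc k) = q"
proof -
  assume q: "q \<in> perms k"
  have "map (\<lambda>i. inc k ! (i - 1)) q = map id q"
  proof (rule map_cong[OF refl])
    fix i assume "i \<in> set q"
    then have "1 \<le> i" "i \<le> k" using perms_set[OF q] by auto
    then show "inc k ! (i - 1) = id i" by (simp add: inc_def nth_upt del: upt_Suc)
  qed
  then show ?thesis using perms_len[OF q] by (simp add: sigma_act_def)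
qed

definition unsort :: "nat \<Rightarrow> nat list \<Rightarrow> nat list" where
  "unsort k xs = sort (take k xs) @ drop k xs"

lemma unsort_sigma:
  assumes "q \<in> perms k" "k \<le> length xs" "sorted_wrt (<) (take k xs)"
  shows "unsort k (sigma_act q xs) = xs"
proof -
  have l: "length q = k" using perms_len[OF assms(1)] .
  have "sort (map (\<lambda>i. xs ! (i - 1)) q) = take k xs"
    by (rule properties_for_sort) (use mset_take_sigma[OF assms(1,2)] assms(3) strict_sorted_iff in auto)
  then show ?thesis using l by (simp add: unsort_def sigma_act_def)
qed

lemma sort_rk:
  assumes "distinct ys" "x \<in> set ys"
  shows "sort ys ! (rk ys x - 1) = x"
proof -
  let ?zs = "sort ys"
  have s: "sorted_wrt (<) ?zs" using assms(1) by (simp add: strict_sorted_iff)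
  have st: "set ?zs = set ys" by simp
  obtain j where j: "j < length ?zs" "x = ?zs ! j" using assms(2) st by (metis in_set_conv_nth)
  have "rk ys x = rk ?zs x" using rk_set_eq[OF st] by simp
  also have "\<dots> = Suc j" using rk_sorted_nth[OF s j(1)] j(2) by simp
  finally show ?thesis using j by simp
qed

lemma sigma_unsort:
  assumes "distinct xs" "k \<le> length xs" "std (take k xs) = q"
  shows "sigma_act q (unsort k xs) = xs"
proof -
  let ?ys = "take k xs"
  have lq: "length q = k" using assms by (auto simp: std_def)
  have d: "distinct ?ys" using assms(1) by simp
  have ls: "length (sort ?ys) = k" using assms(2) by simp
  have "map (\<lambda>i. unsort k xs ! (i - 1)) q = map (\<lambda>i. sort ?ys ! (i - 1)) q"
  proof (rule map_cong[OF refl])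
    fix i assume "i \<in> set q"
    then obtain x where x: "x \<in> set ?ys" "i = rk ?ys x" using assms(3) by (auto simp: std_rk)
    have "1 \<le> i"
    proof -
      have "x \<in> {y \<in> set ?ys. y \<le> x}" using x by simp
      then have "0 < card {y \<in> set ?ys. y \<le> x}" by (auto simp: card_gt_0_iff)
      then show ?thesis using x by (simp add: rk_def)
    qed
    moreover have "i \<le> card (set ?ys)" unfolding x rk_def by (rule card_mono) auto
    ultimately have "i - 1 < k" using distinct_card[OF d] assms(2) by simp
    then show "unsort k xs ! (i - 1) = sort ?ys ! (i - 1)"
      using ls by (simp add: unsort_def nth_append)
  qed
  also have "\<dots> = map (\<lambda>x. sort ?ys ! (rk ?ys x - 1)) ?ys"
    unfolding assms(3)[symmetric] std_rk by simp
  also have "\<dots> = ?ys" using sort_rk[OF d] by (simp add: map_idI)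
  finally show ?thesis using lq ls by (simp add: sigma_act_def unsort_def)
qed

lemma mset_unsort: "mset (unsort k xs) = mset xs"
  by (metis append_take_drop_id mset_append mset_sort unsort_def)

lemma sort_map_mono:
  assumes "\<And>x y. x \<le> y \<Longrightarrow> f x \<le> f y"
  shows "map f (sort ys) = sort (map f ys)"
proof (rule properties_for_sort[symmetric])
  show "mset (map f (sort ys)) = mset (map f ys)" by (simp add: mset_map)
  have "sorted_wrt (\<le>) (sort ys)" by (rule sorted_sort)
  then have "sorted_wrt (\<lambda>x y. f x \<le> f y) (sort ys)"
    by (rule sorted_wrt_mono_rel[rotated]) (use assms in auto)
  then show "sorted (map f (sort ys))" by (simp add: sorted_map)
qed

lemma std_unsort: "std (unsort k xs) = unsort k (std xs)"
proof -
  have st: "set (unsort k xs) = set xs" by (metis mset_unsort set_mset_mset)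
  have "std (unsort k xs) = map (rk xs) (sort (take k xs)) @ map (rk xs) (drop k xs)"
    using rk_set_eq[OF st] by (simp add: std_rk unsort_def)
  also have "map (rk xs) (sort (take k xs)) = sort (map (rk xs) (take k xs))"
    by (rule sort_map_mono) (rule rk_le)
  finally show ?thesis by (simp add: std_rk unsort_def take_map drop_map)
qed

lemma take_unsort:
  assumes "k \<le> n" "k \<le> length xs"
  shows "take n (unsort k xs) = unsort k (take n xs)"
  using assms by (simp add: unsort_def min_absorb1 drop_take)

lemma pat_unsort:
  assumes "k \<le> n" "k \<le> length xs"
  shows "pat n (unsort k xs) = unsort k (pat n xs)"
  using assms by (simp add: pat_def take_unsort std_unsort)


definition Aset :: "nat \<Rightarrow> nat \<Rightarrow> nat list \<Rightarrow> nat list set" where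
  "Aset m n t = {\<pi> \<in> perms m. pat n \<pi> = t}"

lemma finite_Aset: "finite (Aset m n t)"
  unfolding Aset_def using finite_perms by simp

lemma bij_sigma:
  assumes r: "r \<in> perms k" and t: "t \<in> perms n" and kn: "k \<le> n" and nm: "n \<le> m"
    and srt: "sorted_wrt (<) (take k t)"
  shows "bij_betw (sigma_act r) (Aset m n t) (Aset m n (sigma_act r t))"
proof (rule bij_betw_byWitness[where f' = "unsort k"])
  have lt: "length t = n" using t perms_len by blast
  show "\<forall>a\<in>Aset m n t. unsort k (sigma_act r a) = a"
  proof
    fix a assume a: "a \<in> Aset m n t"
    then have la: "length a = m" and pa: "pat n a = t" by (auto simp: Aset_def perms_def)
    show "unsort k (sigma_act r a) = a"
      by (rule unsort_sigma[OF r]) (use la kn nm sorted_from_pat[OF pa kn srt] in auto)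
  qed
  show "\<forall>a'\<in>Aset m n (sigma_act r t). sigma_act r (unsort k a') = a'"
  proof
    fix a assume a: "a \<in> Aset m n (sigma_act r t)"
    then have la: "length a = m" and pa: "pat n a = sigma_act r t" and da: "distinct a"
      by (auto simp: Aset_def perms_def)
    have "std (take k a) = pat k a" by (simp add: pat_def)
    also have "\<dots> = pat k (pat n a)" using pat_pat[OF kn] by simp
    also have "\<dots> = std (take k (sigma_act r t))" using pa by (simp add: pat_def)
    also have "\<dots> = std (sigma_act r (take k t))" using take_sigma[OF r le_refl] lt kn by simp
    also have "\<dots> = sigma_act r (std (take k t))" using std_sigma[OF r] lt kn by simp
    also have "\<dots> = sigma_act r (inc k)" using std_sorted[OF srt] lt kn by (simp add: inc_def)
    also have "\<dots> = r" using sigma_inc[OF r] .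
    finally have q: "std (take k a) = r" .
    show "sigma_act r (unsort k a) = a"
      using sigma_unsort[OF da _ q] la kn nm by simp
  qed
  show "sigma_act r ` Aset m n t \<subseteq> Aset m n (sigma_act r t)"
  proof
    fix b assume "b \<in> sigma_act r ` Aset m n t"
    then obtain a where a: "a \<in> Aset m n t" "b = sigma_act r a" by auto
    then have la: "length a = m" and pa: "pat n a = t" and pm: "a \<in> perms m"
      by (auto simp: Aset_def perms_def)
    have "b \<in> perms m" using pm mset_sigma[OF r, of a] la kn nm a(2) by (simp add: perms_mset)
    moreover have "pat n b = sigma_act r t" using pat_sigma[OF r kn, of a] la kn nm a(2) pa by simp
    ultimately show "b \<in> Aset m n (sigma_act r t)" by (simp add: Aset_def)
  qed
  show "unsort k ` Aset m n (sigma_act r t) \<subseteq> Aset m n t"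
  proof
    fix b assume "b \<in> unsort k ` Aset m n (sigma_act r t)"
    then obtain a where a: "a \<in> Aset m n (sigma_act r t)" "b = unsort k a" by auto
    then have la: "length a = m" and pa: "pat n a = sigma_act r t" and pm: "a \<in> perms m"
      by (auto simp: Aset_def perms_def)
    have "b \<in> perms m" using pm mset_unsort[of k a] a(2) by (simp add: perms_mset)
    moreover have "pat n b = t"
      using pat_unsort[OF kn, of a] la kn nm a(2) pa unsort_sigma[OF r _ srt] lt by simp
    ultimately show "b \<in> Aset m n t" by (simp add: Aset_def)
  qed
qed

lemma bij_restrict:
  assumes "bij_betw f A B" "\<And>x. x \<in> A \<Longrightarrow> P (f x) \<longleftrightarrow> Q x"
  shows "bij_betw f {x \<in> A. Q x} {y \<in> B. P y}"
  using assms unfolding bij_betw_def by (auto intro: inj_on_subset)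

lemma weight:
  assumes pe: "prefix_equivariant N c" and k: "1 \<le> k" "k \<le> N" and r: "r \<in> perms k"
    and p: "\<pi> \<in> perms N" and s: "sorted_wrt (<) (take k \<pi>)"
  shows "c (sigma_act r \<pi>) + c (inc k) = c \<pi> + c r"
proof -
  have "int (c \<pi>) - int (c (sigma_act r \<pi>)) = int (c (inc k)) - int (c r)"
    using pe k r p s unfolding prefix_equivariant_def by blast
  then show ?thesis by linarith
qed

lemma wsum:
  fixes \<theta> :: real
  assumes pe: "prefix_equivariant N c" and k: "1 \<le> k" and kn: "k \<le> n" and nN: "n \<le> N"
    and r: "r \<in> perms k" and t: "t \<in> perms n" and srt: "sorted_wrt (<) (take k t)"
    and PQ: "\<And>\<pi>. \<pi> \<in> Aset N n t \<Longrightarrow> P (sigma_act r \<pi>) \<longleftrightarrow> Q \<pi>"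
  shows "(\<Sum>\<rho>\<in>{\<rho> \<in> Aset N n (sigma_act r t). P \<rho>}. \<theta> ^ c \<rho>) * \<theta> ^ c (inc k)
       = (\<Sum>\<pi>\<in>{\<pi> \<in> Aset N n t. Q \<pi>}. \<theta> ^ c \<pi>) * \<theta> ^ c r"
proof -
  have b: "bij_betw (sigma_act r) {\<pi> \<in> Aset N n t. Q \<pi>} {\<rho> \<in> Aset N n (sigma_act r t). P \<rho>}"
    by (rule bij_restrict[OF bij_sigma[OF r t kn nN srt]]) (rule PQ)
  have "(\<Sum>\<rho>\<in>{\<rho> \<in> Aset N n (sigma_act r t). P \<rho>}. \<theta> ^ c \<rho>) * \<theta> ^ c (inc k)
      = (\<Sum>\<pi>\<in>{\<pi> \<in> Aset N n t. Q \<pi>}. \<theta> ^ c (sigma_act r \<pi>)) * \<theta> ^ c (inc k)"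
    using sum.reindex_bij_betw[OF b, of "\<lambda>\<rho>. \<theta> ^ c \<rho>"] by simp
  also have "\<dots> = (\<Sum>\<pi>\<in>{\<pi> \<in> Aset N n t. Q \<pi>}. \<theta> ^ c (sigma_act r \<pi>) * \<theta> ^ c (inc k))"
    by (simp add: sum_distrib_right)
  also have "\<dots> = (\<Sum>\<pi>\<in>{\<pi> \<in> Aset N n t. Q \<pi>}. \<theta> ^ c \<pi> * \<theta> ^ c r)"
  proof (rule sum.cong[OF refl])
    fix \<pi> assume "\<pi> \<in> {\<pi> \<in> Aset N n t. Q \<pi>}"
    then have p: "\<pi> \<in> perms N" and pa: "pat n \<pi> = t" by (auto simp: Aset_def)
    have "c (sigma_act r \<pi>) + c (inc k) = c \<pi> + c r"
      by (rule weight[OF pe k _ r p sorted_from_pat[OF pa kn srt]]) (use kn nN in simp)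
    then show "\<theta> ^ c (sigma_act r \<pi>) * \<theta> ^ c (inc k) = \<theta> ^ c \<pi> * \<theta> ^ c r"
      by (metis power_add)
  qed
  also have "\<dots> = (\<Sum>\<pi>\<in>{\<pi> \<in> Aset N n t. Q \<pi>}. \<theta> ^ c \<pi>) * \<theta> ^ c r"
    by (simp add: sum_distrib_right)
  finally show ?thesis .
qed

lemma Dw_Aset: "Dw N c \<theta> p = (\<Sum>\<pi>\<in>Aset N (length p) p. \<theta> ^ c \<pi>)"
  by (simp add: Dw_def Aset_def)

lemma Sw_Aset: "Sw N c \<theta> p = (\<Sum>\<pi>\<in>{\<pi> \<in> Aset N (length p) p. \<pi> ! (length p - 1) = N}. \<theta> ^ c \<pi>) / Dw N c \<theta> p"
proof -
  have "{\<pi> \<in> perms N. pat (length p) \<pi> = p \<and> \<pi> ! (length p - 1) = N}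
      = {\<pi> \<in> Aset N (length p) p. \<pi> ! (length p - 1) = N}" by (auto simp: Aset_def)
  then show ?thesis unfolding Sw_def by simp
qed

lemma part:
  assumes lp: "length p = m" and mN: "m < N"
  shows "(\<Sum>\<pi>\<in>{\<pi> \<in> Aset N m p. P \<pi>}. h \<pi>)
       = (\<Sum>q\<in>{q \<in> perms (Suc m). pat m q = p}. \<Sum>\<pi>\<in>{\<pi> \<in> Aset N (Suc m) q. P \<pi>}. h \<pi>)"
proof -
  let ?S = "{\<pi> \<in> Aset N m p. P \<pi>}" and ?T = "{q \<in> perms (Suc m). pat m q = p}"
  have fS: "finite ?S" using finite_Aset by simp
  have fT: "finite ?T" using finite_perms by simp
  have img: "pat (Suc m) ` ?S \<subseteq> ?T"
  proof
    fix q assume "q \<in> pat (Suc m) ` ?S"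
    then obtain \<pi> where \<pi>: "\<pi> \<in> ?S" "q = pat (Suc m) \<pi>" by auto
    then have "\<pi> \<in> perms N" "pat m \<pi> = p" by (auto simp: Aset_def)
    then have d: "distinct (take (Suc m) \<pi>)" and l: "length (take (Suc m) \<pi>) = Suc m"
      using mN by (auto simp: perms_def)
    have "q \<in> perms (Suc m)" using std_perm[OF d] l \<pi>(2) by (simp add: pat_def)
    moreover have "pat m q = p" using \<pi>(2) pat_pat[of m "Suc m" \<pi>] \<open>pat m \<pi> = p\<close> by simp
    ultimately show "q \<in> ?T" by simp
  qed
  have "(\<Sum>q\<in>?T. \<Sum>\<pi>\<in>{\<pi> \<in> Aset N (Suc m) q. P \<pi>}. h \<pi>) = (\<Sum>q\<in>?T. \<Sum>\<pi>\<in>{x. x \<in> ?S \<and> pat (Suc m) x = q}. h \<pi>)"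
  proof (rule sum.cong[OF refl])
    fix q assume q: "q \<in> ?T"
    have "{\<pi> \<in> Aset N (Suc m) q. P \<pi>} = {x. x \<in> ?S \<and> pat (Suc m) x = q}"
    proof (rule set_eqI, rule iffI)
      fix x assume x: "x \<in> {\<pi> \<in> Aset N (Suc m) q. P \<pi>}"
      then have "pat m x = pat m (pat (Suc m) x)" using pat_pat[of m "Suc m" x] by simp
      then have "pat m x = p" using x q by (simp add: Aset_def)
      then show "x \<in> {x. x \<in> ?S \<and> pat (Suc m) x = q}" using x by (simp add: Aset_def)
    qed (auto simp: Aset_def)
    then show "(\<Sum>\<pi>\<in>{\<pi> \<in> Aset N (Suc m) q. P \<pi>}. h \<pi>) = (\<Sum>\<pi>\<in>{x. x \<in> ?S \<and> pat (Suc m) x = q}. h \<pi>)"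
      by simp
  qed
  also have "\<dots> = sum h ?S" by (rule sum.group[OF fS fT img])
  finally show ?thesis by simp
qed

lemma std_perm_id: "p \<in> perms m \<Longrightarrow> std p = p"
proof -
  assume p: "p \<in> perms m"
  have "rk p x = x" if "x \<in> set p" for x
  proof -
    have "x \<le> m" using that p by (auto simp: perms_def)
    then have "{y \<in> set p. y \<le> x} = {1..x}" using p by (auto simp: perms_def)
    then show ?thesis by (simp add: rk_def)
  qed
  then show ?thesis by (simp add: std_rk map_idI)
qed

lemma Dw_pos:
  fixes \<theta> :: real
  assumes p: "p \<in> perms m" and mN: "m \<le> N" and th: "\<theta> > 0"
  shows "Dw N c \<theta> p > 0"
proof -
  let ?w = "p @ [Suc m..<Suc N]"
  have lp: "length p = m" using p by (simp add: perms_def)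
  have "?w \<in> perms N"
  proof -
    have "length ?w = N" using lp mN by simp
    moreover have "distinct ?w" using p by (auto simp: perms_def)
    moreover have "set ?w = {1..N}" using p mN by (auto simp: perms_def)
    ultimately show ?thesis by (simp add: perms_def)
  qed
  moreover have "pat m ?w = p" using lp std_perm_id[OF p] by (simp add: pat_def)
  ultimately have "?w \<in> Aset N (length p) p" using lp by (simp add: Aset_def)
  then show ?thesis unfolding Dw_Aset
    by (intro sum_pos finite_Aset) (use th in auto)
qed

lemma Dw_nonneg: "(\<theta>::real) > 0 \<Longrightarrow> Dw N c \<theta> p \<ge> 0"
  by (simp add: Dw_def sum_nonneg)

lemma Sw_nonneg: "(\<theta>::real) > 0 \<Longrightarrow> Sw N c \<theta> p \<ge> 0"
  by (simp add: Sw_def Dw_def sum_nonneg)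


lemma ratio_lemma:
  fixes a b W1 W2 D1 D2 :: real
  assumes "b \<noteq> 0" "a \<noteq> 0" "W1 * b = W2 * a" "D1 = D2 * (a / b)"
  shows "W1 / D1 = W2 / D2"
proof -
  have "W1 = W2 * (a / b)" using assms by (simp add: field_simps)
  moreover have "a / b \<noteq> 0" using assms by simp
  ultimately show ?thesis using assms(4) by simp
qed

context
  fixes N k :: nat and c :: "nat list \<Rightarrow> nat" and \<theta> :: real and r :: "nat list"
  assumes pe: "prefix_equivariant N c" and th: "\<theta> > 0" and k1: "1 \<le> k" and kN: "k < N"
    and r: "r \<in> perms k"
begin

lemma D_scale:
  assumes t: "t \<in> perms n" and kn: "k \<le> n" and nN: "n \<le> N" and srt: "sorted_wrt (<) (take k t)"
  shows "Dw N c \<theta> (sigma_act r t) = Dw N c \<theta> t * (\<theta> ^ c r / \<theta> ^ c (inc k))"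
proof -
  have lt: "length t = n" using t perms_len by blast
  have ls: "length (sigma_act r t) = n" using length_sigma[OF r] lt kn by simp
  have "(\<Sum>\<rho>\<in>{\<rho> \<in> Aset N n (sigma_act r t). True}. \<theta> ^ c \<rho>) * \<theta> ^ c (inc k)
       = (\<Sum>\<pi>\<in>{\<pi> \<in> Aset N n t. True}. \<theta> ^ c \<pi>) * \<theta> ^ c r"
    by (rule wsum[OF pe k1 kn nN r t srt]) simp
  then have "Dw N c \<theta> (sigma_act r t) * \<theta> ^ c (inc k) = Dw N c \<theta> t * \<theta> ^ c r"
    using lt ls by (simp add: Dw_Aset)
  moreover have "\<theta> ^ c (inc k) \<noteq> 0" using th by simp
  ultimately show ?thesis by (simp add: field_simps)
qed

lemma Sw_inv:
  assumes t: "t \<in> perms n" and kn: "k < n" and nN: "n \<le> N" and srt: "sorted_wrt (<) (take k t)"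
  shows "Sw N c \<theta> (sigma_act r t) = Sw N c \<theta> t"
proof -
  have lt: "length t = n" using t perms_len by blast
  have ls: "length (sigma_act r t) = n" using length_sigma[OF r] lt kn by simp
  have "(\<Sum>\<rho>\<in>{\<rho> \<in> Aset N n (sigma_act r t). \<rho> ! (n - 1) = N}. \<theta> ^ c \<rho>) * \<theta> ^ c (inc k)
       = (\<Sum>\<pi>\<in>{\<pi> \<in> Aset N n t. \<pi> ! (n - 1) = N}. \<theta> ^ c \<pi>) * \<theta> ^ c r"
  proof (rule wsum[OF pe k1 _ nN r t srt])
    show "k \<le> n" using kn by simp
    fix \<pi> assume "\<pi> \<in> Aset N n t"
    then have "length \<pi> = N" by (simp add: Aset_def perms_def)
    then show "(sigma_act r \<pi> ! (n - 1) = N) = (\<pi> ! (n - 1) = N)"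
      using sigma_nth_ge[OF r, of "n - 1" \<pi>] kn nN by simp
  qed
  moreover have "\<theta> ^ c (inc k) \<noteq> 0" "\<theta> ^ c r \<noteq> 0" using th by simp_all
  moreover have "Dw N c \<theta> (sigma_act r t) = Dw N c \<theta> t * (\<theta> ^ c r / \<theta> ^ c (inc k))"
    using D_scale[OF t _ nN srt] kn by simp
  ultimately show ?thesis unfolding Sw_Aset lt ls by (intro ratio_lemma[of "\<theta> ^ c (inc k)" "\<theta> ^ c r"])
qed

lemma Scont_inv:
  assumes t: "t \<in> perms n" and kn: "k \<le> n" and nN: "n < N" and srt: "sorted_wrt (<) (take k t)"
    and f: "\<And>u. u \<in> Aset (Suc n) n t \<Longrightarrow> f (sigma_act r u) = f u"
  shows "Scont N c \<theta> f (sigma_act r t) = Scont N c \<theta> f t"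
proof -
  define a where "a = \<theta> ^ c r / \<theta> ^ c (inc k)"
  have a: "a > 0" using th by (simp add: a_def)
  have lt: "length t = n" using t perms_len by blast
  have ls: "length (sigma_act r t) = n" using length_sigma[OF r] lt kn by simp
  have b: "bij_betw (sigma_act r) (Aset (Suc n) n t) (Aset (Suc n) n (sigma_act r t))"
    by (rule bij_sigma[OF r t kn _ srt]) simp
  have "(\<Sum>q\<in>Aset (Suc n) n (sigma_act r t). Dw N c \<theta> q * f q)
      = (\<Sum>u\<in>Aset (Suc n) n t. Dw N c \<theta> (sigma_act r u) * f (sigma_act r u))"
    using sum.reindex_bij_betw[OF b, of "\<lambda>q. Dw N c \<theta> q * f q"] by simp
  also have "\<dots> = (\<Sum>u\<in>Aset (Suc n) n t. Dw N c \<theta> u * f u * a)"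
  proof (rule sum.cong[OF refl])
    fix u assume u: "u \<in> Aset (Suc n) n t"
    then have up: "u \<in> perms (Suc n)" and pu: "pat n u = t" by (auto simp: Aset_def)
    have "Dw N c \<theta> (sigma_act r u) = Dw N c \<theta> u * a"
      unfolding a_def by (rule D_scale[OF up _ _ sorted_from_pat[OF pu kn srt]]) (use kn nN in auto)
    then show "Dw N c \<theta> (sigma_act r u) * f (sigma_act r u) = Dw N c \<theta> u * f u * a"
      using f[OF u] by simp
  qed
  also have "\<dots> = (\<Sum>u\<in>Aset (Suc n) n t. Dw N c \<theta> u * f u) * a"
    by (simp add: sum_distrib_right)
  finally have num: "(\<Sum>q\<in>Aset (Suc n) n (sigma_act r t). Dw N c \<theta> q * f q)
      = (\<Sum>u\<in>Aset (Suc n) n t. Dw N c \<theta> u * f u) * a" .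
  have den: "Dw N c \<theta> (sigma_act r t) = Dw N c \<theta> t * a"
    using D_scale[OF t kn _ srt] nN by (simp add: a_def)
  show ?thesis unfolding Scont_def ls lt
    using num den a by (simp add: Aset_def)
qed

lemma SbarR_inv:
  "\<forall>t n. t \<in> perms n \<longrightarrow> n + j = N \<longrightarrow> k < n \<longrightarrow> sorted_wrt (<) (take k t) \<longrightarrow>
     SbarR j N c \<theta> (sigma_act r t) = SbarR j N c \<theta> t"
proof (induction j)
  case 0
  then show ?case using Sw_inv by simp
next
  case (Suc j)
  show ?case
  proof (intro allI impI)
    fix t n assume t: "t \<in> perms n" and nj: "n + Suc j = N" and kn: "k < n"
      and srt: "sorted_wrt (<) (take k t)"
    have "Scont N c \<theta> (SbarR j N c \<theta>) (sigma_act r t) = Scont N c \<theta> (SbarR j N c \<theta>) t"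
    proof (rule Scont_inv[OF t _ _ srt])
      show "k \<le> n" "n < N" using kn nj by auto
      fix u assume u: "u \<in> Aset (Suc n) n t"
      then have up: "u \<in> perms (Suc n)" and pu: "pat n u = t" by (auto simp: Aset_def)
      show "SbarR j N c \<theta> (sigma_act r u) = SbarR j N c \<theta> u"
        using Suc.IH up nj kn sorted_from_pat[OF pu _ srt] by simp
    qed
    moreover have "Sw N c \<theta> (sigma_act r t) = Sw N c \<theta> t"
      by (rule Sw_inv[OF t kn _ srt]) (use nj in simp)
    ultimately show "SbarR (Suc j) N c \<theta> (sigma_act r t) = SbarR (Suc j) N c \<theta> t" by simp
  qed
qed

lemma Sc_inv: "Sc N c \<theta> r = Sc N c \<theta> (inc k)"
proof -
  have e: "inc k \<in> perms k" by (rule inc_perm)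
  have se: "sorted_wrt (<) (take k (inc k))" unfolding inc_def by (simp del: upt_Suc)
  have "Scont N c \<theta> (Sbar N c \<theta>) (sigma_act r (inc k)) = Scont N c \<theta> (Sbar N c \<theta>) (inc k)"
  proof (rule Scont_inv[OF e le_refl kN se])
    fix u assume u: "u \<in> Aset (Suc k) k (inc k)"
    then have up: "u \<in> perms (Suc k)" and pu: "pat k u = inc k" by (auto simp: Aset_def)
    have lu: "length u = Suc k" using up perms_len by blast
    have "length (sigma_act r u) = Suc k" using length_sigma[OF r] lu by simp
    then show "Sbar N c \<theta> (sigma_act r u) = Sbar N c \<theta> u"
      using SbarR_inv[of "N - Suc k"] up kN lu sorted_from_pat[OF pu le_refl se]
      by (simp add: Sbar_def)
  qed
  then show ?thesis using sigma_inc[OF r] kN perms_len[OF r] by (simp add: Sc_def)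
qed

end


theorem corollary3p7:
  fixes N k :: nat and c :: "nat list \<Rightarrow> nat" and \<theta> :: real
  assumes "prefix_equivariant N c"
    and "\<theta> > 0"
    and "2 \<le> k" and "k \<le> N"
    and "negative_prefix N c \<theta> (inc k)"
  shows "negative_prefix N c \<theta> (inc (k - 1))"
proof -
  note pe = assms(1) and th = assms(2) and k2 = assms(3)
  define e where "e = inc k"
  define e' where "e' = inc (k - 1)"
  define T where "T = {q \<in> perms k. pat (k - 1) q = e'}"
  define b where "b = \<theta> ^ c e"
  have bpos: "b > 0" using th by (simp add: b_def)
  have k1: "1 \<le> k" using k2 by simp
  have neg: "Sw N c \<theta> e < Sc N c \<theta> e" using assms(5) by (simp add: negative_prefix_def e_def)
  have kN: "k < N"
  proof (rule ccontr)
    assume "\<not> k < N"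
    then have "Sc N c \<theta> e = 0" by (simp add: Sc_def e_def)
    then show False using neg Sw_nonneg[OF th, of N c e] by simp
  qed
  have le: "length e = k" "length e' = k - 1" by (simp_all add: e_def e'_def)
  have ep: "e \<in> perms k" "e' \<in> perms (k - 1)" by (simp_all add: e_def e'_def inc_perm)
  have se: "sorted_wrt (<) (take k e)" unfolding e_def inc_def by (simp del: upt_Suc)
  have Sk: "Suc (k - 1) = k" using k1 by simp
  have fT: "finite T" using finite_perms by (simp add: T_def)
  have Tp: "q \<in> T \<Longrightarrow> q \<in> perms k" for q by (simp add: T_def)
  have Tl: "q \<in> T \<Longrightarrow> length q = k" for q using Tp perms_len by blast
  have De'pos: "Dw N c \<theta> e' > 0" using Dw_pos[OF ep(2) _ th] kN by simp
  have Depos: "Dw N c \<theta> e > 0" using Dw_pos[OF ep(1) _ th] kN by simp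
  have Dpart: "Dw N c \<theta> e' = (\<Sum>q\<in>T. Dw N c \<theta> q)"
  proof -
    have "(\<Sum>\<pi>\<in>{\<pi> \<in> Aset N (k - 1) e'. True}. \<theta> ^ c \<pi>)
      = (\<Sum>q\<in>{q \<in> perms (Suc (k - 1)). pat (k - 1) q = e'}. \<Sum>\<pi>\<in>{\<pi> \<in> Aset N (Suc (k - 1)) q. True}. \<theta> ^ c \<pi>)"
      by (rule part) (use le kN in auto)
    then have "Dw N c \<theta> e' = (\<Sum>q\<in>T. \<Sum>\<pi>\<in>Aset N k q. \<theta> ^ c \<pi>)"
      unfolding Dw_Aset le Sk T_def by simp
    also have "\<dots> = (\<Sum>q\<in>T. Dw N c \<theta> q)"
      by (rule sum.cong[OF refl]) (simp add: Dw_Aset Tl)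
    finally show ?thesis .
  qed
  have SbarGe: "Sbar N c \<theta> q \<ge> Sc N c \<theta> e" if q: "q \<in> perms k" for q
  proof -
    have lq: "length q = k" using q perms_len by blast
    define j where "j = N - Suc k"
    have Nk: "N - k = Suc j" using kN by (simp add: j_def)
    have "Sbar N c \<theta> q = max (Sw N c \<theta> q) (Scont N c \<theta> (SbarR j N c \<theta>) q)"
      by (simp add: Sbar_def lq Nk)
    also have "Scont N c \<theta> (SbarR j N c \<theta>) q = Scont N c \<theta> (Sbar N c \<theta>) q"
      unfolding Scont_def
      by (rule arg_cong[where f = "\<lambda>x. x / _"], rule sum.cong[OF refl])
         (auto simp: Sbar_def j_def lq perms_def)
    also have "\<dots> = Sc N c \<theta> q" using kN lq by (simp add: Sc_def)
    also have "\<dots> = Sc N c \<theta> e" unfolding e_def by (rule Sc_inv[OF pe th k1 kN q])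
    finally show ?thesis by simp
  qed
  have ScE': "Sc N c \<theta> e' = (\<Sum>q\<in>T. Dw N c \<theta> q * Sbar N c \<theta> q) / Dw N c \<theta> e'"
    using kN le k1 by (simp add: Sc_def Scont_def T_def Sk)
  have "(\<Sum>q\<in>T. Dw N c \<theta> q * Sc N c \<theta> e) \<le> (\<Sum>q\<in>T. Dw N c \<theta> q * Sbar N c \<theta> q)"
    by (rule sum_mono, rule mult_left_mono) (use SbarGe Tp Dw_nonneg[OF th] in auto)
  moreover have "Dw N c \<theta> e' * Sc N c \<theta> e = (\<Sum>q\<in>T. Dw N c \<theta> q * Sc N c \<theta> e)"
    using Dpart by (simp add: sum_distrib_right)
  ultimately have "Sc N c \<theta> e * Dw N c \<theta> e' \<le> (\<Sum>q\<in>T. Dw N c \<theta> q * Sbar N c \<theta> q)"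
    by (simp add: mult.commute)
  then have B: "Sc N c \<theta> e \<le> Sc N c \<theta> e'"
    using De'pos ScE' by (simp add: pos_le_divide_eq)
  define We where "We = (\<Sum>\<pi>\<in>{\<pi> \<in> Aset N k e. \<pi> ! (k - 1) = N}. \<theta> ^ c \<pi>)"
  define V where "V q = (\<Sum>\<pi>\<in>{\<pi> \<in> Aset N k q. \<pi> ! (k - 2) = N}. \<theta> ^ c \<pi>)" for q
  define W' where "W' = (\<Sum>\<pi>\<in>{\<pi> \<in> Aset N (k - 1) e'. \<pi> ! (k - 2) = N}. \<theta> ^ c \<pi>)"
  have SwE: "Sw N c \<theta> e = We / Dw N c \<theta> e" by (simp add: Sw_Aset le We_def)
  have SwE': "Sw N c \<theta> e' = W' / Dw N c \<theta> e'"
    using le by (simp add: Sw_Aset W'_def numeral_2_eq_2)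
  have Wpart: "W' = (\<Sum>q\<in>T. V q)"
  proof -
    have "W' = (\<Sum>q\<in>{q \<in> perms (Suc (k - 1)). pat (k - 1) q = e'}. \<Sum>\<pi>\<in>{\<pi> \<in> Aset N (Suc (k - 1)) q. \<pi> ! (k - 2) = N}. \<theta> ^ c \<pi>)"
      unfolding W'_def by (rule part) (use le kN in auto)
    then show ?thesis unfolding Sk T_def V_def by simp
  qed
  have Vb: "V q * b \<le> We * \<theta> ^ c q" if q: "q \<in> perms k" for q
  proof -
    have lq: "length q = k" using q perms_len by blast
    have "(\<Sum>\<rho>\<in>{\<rho> \<in> Aset N k (sigma_act q e). \<rho> ! (k - 2) = N}. \<theta> ^ c \<rho>) * \<theta> ^ c (inc k)
       = (\<Sum>\<pi>\<in>{\<pi> \<in> Aset N k e. \<pi> ! (q ! (k - 2) - 1) = N}. \<theta> ^ c \<pi>) * \<theta> ^ c q"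
    proof (rule wsum[OF pe k1 le_refl _ q ep(1) se])
      show "k \<le> N" using kN by simp
      fix \<pi> assume "\<pi> \<in> Aset N k e"
      show "(sigma_act q \<pi> ! (k - 2) = N) = (\<pi> ! (q ! (k - 2) - 1) = N)"
        using sigma_nth_lt[OF q, of "k - 2" \<pi>] k2 by simp
    qed
    then have eq: "V q * b = (\<Sum>\<pi>\<in>{\<pi> \<in> Aset N k e. \<pi> ! (q ! (k - 2) - 1) = N}. \<theta> ^ c \<pi>) * \<theta> ^ c q"
      using sigma_inc[OF q] by (simp add: V_def b_def e_def)
    have sub: "{\<pi> \<in> Aset N k e. \<pi> ! (q ! (k - 2) - 1) = N} \<subseteq> {\<pi> \<in> Aset N k e. \<pi> ! (k - 1) = N}"
    proof
      fix \<pi> assume \<pi>: "\<pi> \<in> {\<pi> \<in> Aset N k e. \<pi> ! (q ! (k - 2) - 1) = N}"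
      then have pp: "\<pi> \<in> perms N" and pa: "pat k \<pi> = e" and eqN: "\<pi> ! (q ! (k - 2) - 1) = N"
        by (auto simp: Aset_def)
      define i where "i = q ! (k - 2) - 1"
      have "q ! (k - 2) \<in> set q" using lq k2 by simp
      then have ik: "i < k" using perms_idx[OF q] by (simp add: i_def)
      have lp: "length \<pi> = N" using pp by (simp add: perms_def)
      have srt: "sorted_wrt (<) (take k \<pi>)" by (rule sorted_from_pat[OF pa le_refl se])
      have "\<pi> ! (k - 1) \<in> set \<pi>" using lp kN k1 by simp
      then have leN: "\<pi> ! (k - 1) \<le> N" using pp by (auto simp: perms_def)
      have "i = k - 1"
      proof (rule ccontr)
        assume "i \<noteq> k - 1"
        then have "i < k - 1" using ik by simp
        then have "take k \<pi> ! i < take k \<pi> ! (k - 1)"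
          using sorted_wrt_nth_less[OF srt, of i "k - 1"] lp kN k1 by simp
        then have "\<pi> ! i < \<pi> ! (k - 1)" using ik k1 by simp
        then show False using eqN leN by (simp add: i_def)
      qed
      then show "\<pi> \<in> {\<pi> \<in> Aset N k e. \<pi> ! (k - 1) = N}" using \<pi> eqN by (simp add: i_def)
    qed
    have "(\<Sum>\<pi>\<in>{\<pi> \<in> Aset N k e. \<pi> ! (q ! (k - 2) - 1) = N}. \<theta> ^ c \<pi>) \<le> We"
      unfolding We_def by (rule sum_mono2) (use finite_Aset sub th in auto)
    then show ?thesis using eq th by (simp add: mult_right_mono)
  qed
  have Dq: "\<theta> ^ c q = Dw N c \<theta> q * b / Dw N c \<theta> e" if q: "q \<in> perms k" for q
  proof -
    have "Dw N c \<theta> (sigma_act q e) = Dw N c \<theta> e * (\<theta> ^ c q / \<theta> ^ c (inc k))"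
      by (rule D_scale[OF pe th k1 kN q ep(1) le_refl _ se]) (use kN in simp)
    then have "Dw N c \<theta> q = Dw N c \<theta> e * (\<theta> ^ c q / b)"
      using sigma_inc[OF q] by (simp add: b_def e_def)
    then show ?thesis using Depos bpos by (simp add: field_simps)
  qed
  have "W' * b = (\<Sum>q\<in>T. V q * b)" using Wpart by (simp add: sum_distrib_right)
  also have "\<dots> \<le> (\<Sum>q\<in>T. We * \<theta> ^ c q)" by (rule sum_mono) (use Vb Tp in auto)
  also have "\<dots> = (\<Sum>q\<in>T. We * (Dw N c \<theta> q * b / Dw N c \<theta> e))"
    by (rule sum.cong[OF refl]) (use Dq Tp in auto)
  also have "\<dots> = Sw N c \<theta> e * b * (\<Sum>q\<in>T. Dw N c \<theta> q)"
    by (simp add: SwE sum_distrib_left sum_divide_distrib[symmetric] field_simps)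
  also have "\<dots> = Sw N c \<theta> e * Dw N c \<theta> e' * b" using Dpart by simp
  finally have "W' \<le> Sw N c \<theta> e * Dw N c \<theta> e'" using bpos by simp
  then have A: "Sw N c \<theta> e' \<le> Sw N c \<theta> e" using De'pos SwE' by (simp add: pos_divide_le_eq)
  show ?thesis using A B neg by (simp add: negative_prefix_def e_def e'_def)
qed

end
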